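(* Let $\|\cdot\|$ be a strictly convex norm on $\mathbb R^2$ that is $C^1$ on $\mathbb R^2\setminus\{0\}$. Given $\xi=\gamma(\theta_0)\in\partial\mathsf B$, define $\Phi^\xi:\partial\mathsf B\to\mathbb R^2$ by \[\Phi^\xi(z)=\mathbf 1_{z\cdot i\gamma(\theta_0)>0}\,\gamma'(\theta_0)=\mathbf 1_{z\cdot i\xi>0}\,i\,n_{\mathsf B}(\xi).\] Then there exists a uniformly bounded family $\{\Phi^\xi_\delta\}_{\delta>0}\subset\mathrm{ENT}$ such that $\Phi^\xi_\delta(z)\to\Phi^\xi(z)$ as $\delta\to0$ for every $z\in\partial\mathsf B$.
   Context: $\mathsf B=\{\|z\|<1\}$ normalized so that $\partial\mathsf B$ has length $2\pi$; $\gamma$ is the counterclockwise arc-length parametrization of $\partial\mathsf B$; $n_{\mathsf B}(\xi)$ is the outer unit normal to $\partial\mathsf B$ at $\xi$; $\mathbb R^2\cong\mathbb C$, $i$ is rotation by $\pi/2$. $\mathrm{ENT}=\{\Phi\in C^1(\partial\mathsf B;\mathbb R^2):\frac{d}{d\theta}\Phi(\gamma(\theta))=\lambda_\Phi(\theta)\gamma'(\theta)$ for some $\lambda_\Phi\in C^1(\mathbb R/2\pi\mathbb Z)\}$. *)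

theory Defs
  imports "HOL-Analysis.Analysis"
begin

text \<open>R^2 is identified with the complex plane; i is multiplication by the imaginary unit.\<close>

definition is_norm_on_plane :: "(complex \<Rightarrow> real) \<Rightarrow> bool" where
  "is_norm_on_plane N \<longleftrightarrow>
     (\<forall>x. N x = 0 \<longleftrightarrow> x = 0) \<and>
     (\<forall>x y. N (x + y) \<le> N x + N y) \<and>
     (\<forall>(c::real) x. N (c *\<^sub>R x) = \<bar>c\<bar> * N x)"

definition strictly_convex_norm :: "(complex \<Rightarrow> real) \<Rightarrow> bool" where
  "strictly_convex_norm N \<longleftrightarrow> is_norm_on_plane N \<and>
     (\<forall>x y. N x = 1 \<longrightarrow> N y = 1 \<longrightarrow> x \<noteq> y \<longrightarrow> N ((1/2) *\<^sub>R (x + y)) < 1)"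

definition C1_away_from_origin :: "(complex \<Rightarrow> real) \<Rightarrow> bool" where
  "C1_away_from_origin N \<longleftrightarrow>
     (\<exists>g :: complex \<Rightarrow> complex.
        (\<forall>x. x \<noteq> 0 \<longrightarrow> (N has_derivative (\<lambda>h. g x \<bullet> h)) (at x)) \<and>
        continuous_on (- {0}) g)"

definition ENT :: "(real \<Rightarrow> complex) \<Rightarrow> (complex \<Rightarrow> complex) set" where
  "ENT \<gamma> = {\<Phi>. \<exists>lam :: real \<Rightarrow> real.
      (\<forall>\<theta>. lam (\<theta> + 2 * pi) = lam \<theta>) \<and>
      (\<exists>lam'. (\<forall>\<theta>. (lam has_real_derivative lam' \<theta>) (at \<theta>)) \<and> continuous_on UNIV lam') \<and>
      (\<forall>\<theta>. ((\<lambda>t. \<Phi> (\<gamma> t)) has_vector_derivative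
               (lam \<theta> *\<^sub>R vector_derivative \<gamma> (at \<theta>))) (at \<theta>))}"

definition Phi_xi :: "(real \<Rightarrow> complex) \<Rightarrow> real \<Rightarrow> complex \<Rightarrow> complex" where
  "Phi_xi \<gamma> \<theta>0 z = (if z \<bullet> (\<i> * \<gamma> \<theta>0) > 0 then vector_derivative \<gamma> (at \<theta>0) else 0)"

end

theory Submission
  imports Defs
begin



lemma sqpos_deriv:
  fixes g :: "real \<Rightarrow> real"
  assumes g: "(g has_real_derivative g') (at x)"
  shows "((\<lambda>y. (max 0 (g y))^2) has_real_derivative (2 * max 0 (g x) * g')) (at x)"
proof -
  have cont: "isCont g x" using g by (rule DERIV_isCont)
  hence tn: "(g \<longlongrightarrow> g x) (nhds x)"
    by (simp add: isCont_def tendsto_at_iff_tendsto_nhds)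
  consider "g x > 0" | "g x < 0" | "g x = 0" by linarith
  then show ?thesis
  proof cases
    case 1
    have ev: "eventually (\<lambda>y. g y > 0) (nhds x)"
      using order_tendstoD(1)[OF tn 1] .
    have d2: "((\<lambda>y. (g y)^2) has_real_derivative (2 * g x * g')) (at x)"
      using DERIV_power[OF g, of 2] by (simp add: algebra_simps)
    have e2: "eventually (\<lambda>y. (max 0 (g y))^2 = (g y)^2) (nhds x)"
      using ev by eventually_elim simp
    have "((\<lambda>y. (max 0 (g y))^2) has_real_derivative (2 * g x * g')) (at x) \<longleftrightarrow>
          ((\<lambda>y. (g y)^2) has_real_derivative (2 * g x * g')) (at x)"
      by (rule DERIV_cong_ev[OF refl e2 refl])
    with d2 1 show ?thesis by simp
  next
    case 2
    have ev: "eventually (\<lambda>y. g y < 0) (nhds x)"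
      using order_tendstoD(2)[OF tn 2] .
    have e2: "eventually (\<lambda>y. (max 0 (g y))^2 = (\<lambda>_. 0) y) (nhds x)"
      using ev by eventually_elim simp
    have "((\<lambda>y. (max 0 (g y))^2) has_real_derivative 0) (at x) \<longleftrightarrow>
          ((\<lambda>_. 0) has_real_derivative 0) (at x)"
      by (rule DERIV_cong_ev[OF refl e2 refl])
    with 2 show ?thesis by simp
  next
    case 3
    have q: "((\<lambda>y. (g y - g x) / (y - x)) \<longlongrightarrow> g') (at x)"
      using g by (simp add: has_field_derivative_iff)
    have gl: "((\<lambda>y. g y - g x) \<longlongrightarrow> 0) (at x)"
      using cont by (simp add: isCont_def LIM_zero)
    have h0: "((\<lambda>y. \<bar>g y - g x\<bar> * \<bar>(g y - g x) / (y - x)\<bar>) \<longlongrightarrow> 0 * \<bar>g'\<bar>) (at x)"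
      by (intro tendsto_mult tendsto_rabs q) (use gl tendsto_rabs_zero in auto)
    have h0': "((\<lambda>y. \<bar>g y - g x\<bar> * \<bar>(g y - g x) / (y - x)\<bar>) \<longlongrightarrow> 0) (at x)"
      using h0 by simp
    have cmp: "\<forall>\<^sub>F y in at x. norm (((max 0 (g y))^2 - (max 0 (g x))^2) / (y - x))
              \<le> \<bar>g y - g x\<bar> * \<bar>(g y - g x) / (y - x)\<bar>"
      proof (intro always_eventually allI)
        fix y
        have mle: "(max 0 (g y))^2 \<le> (g y)^2"
          by (auto simp: max_def power2_eq_square)
        have "norm (((max 0 (g y))^2 - (max 0 (g x))^2) / (y - x)) = (max 0 (g y))^2 / \<bar>y - x\<bar>"
          using 3 by (simp add: abs_divide)
        also have "\<dots> \<le> (g y)^2 / \<bar>y - x\<bar>"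
          by (rule divide_right_mono[OF mle]) simp
        also have "\<dots> = \<bar>g y - g x\<bar> * \<bar>(g y - g x) / (y - x)\<bar>"
          using 3 by (simp add: abs_divide power2_eq_square abs_mult)
        finally show "norm (((max 0 (g y))^2 - (max 0 (g x))^2) / (y - x))
              \<le> \<bar>g y - g x\<bar> * \<bar>(g y - g x) / (y - x)\<bar>" .
      qed
    have "((\<lambda>y. ((max 0 (g y))^2 - (max 0 (g x))^2) / (y - x)) \<longlongrightarrow> 0) (at x)"
      by (rule Lim_null_comparison[OF cmp h0'])
    then show ?thesis using 3 by (simp add: has_field_derivative_iff)
  qed
qed

definition kb :: "real \<Rightarrow> real \<Rightarrow> real" where
  "kb e x = (max 0 (cos x - cos e))^2"
definition kb' :: "real \<Rightarrow> real \<Rightarrow> real" where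
  "kb' e x = 2 * max 0 (cos x - cos e) * (- sin x)"

lemma kb_deriv: "(kb e has_real_derivative kb' e x) (at x)"
proof -
  have "((\<lambda>y. cos y - cos e) has_real_derivative (- sin x)) (at x)"
    by (auto intro!: derivative_eq_intros)
  from sqpos_deriv[OF this] show ?thesis
    by (simp add: kb_def[abs_def] kb'_def)
qed

lemma kb'_cont: "continuous_on UNIV (kb' e)"
  unfolding kb'_def[abs_def] by (intro continuous_intros)

lemma kb_cont: "continuous_on UNIV (kb e)"
  unfolding kb_def[abs_def] by (intro continuous_intros)

lemma kb_nonneg: "kb e x \<ge> 0"
  by (simp add: kb_def)

lemma kb_periodic: "kb e (x + of_int k * (2 * pi)) = kb e x"
  using cos.plus_of_int[of x k] by (simp add: kb_def)

lemma kb_window: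
  assumes "0 < e" "e \<le> pi" "kb e x \<noteq> 0"
  shows "\<exists>k::int. \<bar>x - of_int k * (2 * pi)\<bar> < e"
proof -
  define k where "k = floor ((x + pi) / (2 * pi))"
  define y where "y = x - of_int k * (2 * pi)"
  have "of_int k \<le> (x + pi) / (2 * pi)" "(x + pi) / (2 * pi) < of_int k + 1"
    unfolding k_def by linarith+
  hence "of_int k * (2 * pi) \<le> x + pi" "x + pi < (of_int k + 1) * (2 * pi)"
    by (simp_all add: field_simps)
  hence y1: "- pi \<le> y" "y < pi" unfolding y_def by (simp_all add: algebra_simps)
  have cy: "cos y = cos x" unfolding y_def using cos.minus_of_int[of x k] by simp
  have "cos x > cos e" using assms(3) by (auto simp: kb_def max_def split: if_splits)
  hence "cos \<bar>y\<bar> > cos e" using cy by (simp add: cos_abs_real)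
  moreover have "\<bar>y\<bar> \<le> pi" using y1 by linarith
  ultimately have "\<bar>y\<bar> < e"
    using cos_monotone_0_pi_le[of e "\<bar>y\<bar>"] assms y1 by (cases "e \<le> \<bar>y\<bar>") auto
  thus ?thesis unfolding y_def by blast
qed

lemma kb_pos0: assumes "0 < e" "e \<le> pi" shows "kb e (of_int k * (2 * pi)) > 0"
proof -
  have "cos e < cos 0" using cos_monotone_0_pi[of 0 e] assms by simp
  hence "kb e 0 > 0" by (simp add: kb_def)
  thus ?thesis using kb_periodic[of e 0 k] by simp
qed

lemma integral_pos_real:
  fixes f :: "real \<Rightarrow> real"
  assumes "continuous_on {a..b} f" "a < b" "\<And>x. x \<in> {a..b} \<Longrightarrow> f x \<ge> 0"
    "x0 \<in> {a..b}" "f x0 > 0"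
  shows "integral {a..b} f > 0"
proof -
  have "integral {a..b} f \<ge> 0"
    by (rule integral_nonneg) (use assms integrable_continuous_real in auto)
  moreover have "integral {a..b} f \<noteq> 0"
    using integral_eq_0_iff[OF assms(1,2,3)] assms(4,5) by auto
  ultimately show ?thesis by simp
qed

definition Dn :: "real \<Rightarrow> real \<Rightarrow> real \<Rightarrow> real" where
  "Dn a e c = integral {a..a + 2 * pi} (\<lambda>t. kb e (t - c))"

definition rho :: "real \<Rightarrow> real \<Rightarrow> real \<Rightarrow> real \<Rightarrow> real" where
  "rho a e c t = kb e (t - c) / Dn a e c"

lemma kb_shift_cont: "continuous_on S (\<lambda>t. kb e (t - c))"
  by (rule continuous_on_compose2[OF kb_cont, of _ "\<lambda>t. t - c"]) (auto intro!: continuous_intros)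

lemma Dn_pos:
  assumes "0 < e" "e \<le> pi"
  shows "Dn a e c > 0"
proof -
  define k where "k = ceiling ((a - c) / (2 * pi))"
  have "(a - c) / (2 * pi) \<le> of_int k" "of_int k < (a - c) / (2 * pi) + 1"
    unfolding k_def by linarith+
  hence "a - c \<le> of_int k * (2 * pi)" "of_int k * (2 * pi) < a - c + 2 * pi"
    by (simp_all add: field_simps)
  hence x0: "c + of_int k * (2 * pi) \<in> {a..a + 2 * pi}" by auto
  show ?thesis unfolding Dn_def
    by (rule integral_pos_real[OF kb_shift_cont _ _ x0]) (use kb_nonneg kb_pos0[OF assms] in auto)
qed

lemma rho_int:
  assumes "0 < e" "e \<le> pi"
  shows "integral {a..a + 2 * pi} (rho a e c) = 1"
proof -
  have "integral {a..a + 2 * pi} (rho a e c) = integral {a..a + 2 * pi} (\<lambda>t. kb e (t - c)) / Dn a e c"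
    unfolding rho_def by (simp add: divide_inverse)
  thus ?thesis using Dn_pos[OF assms, of a c] by (simp add: Dn_def)
qed

lemma rho_nonneg: "0 < e \<Longrightarrow> e \<le> pi \<Longrightarrow> rho a e c t \<ge> 0"
  using Dn_pos[of e a c] kb_nonneg by (simp add: rho_def)

lemma rho_cont: "continuous_on S (rho a e c)"
  unfolding rho_def[abs_def] divide_inverse by (intro continuous_intros kb_shift_cont)

lemma rho_periodic: "rho a e c (t + of_int k * (2 * pi)) = rho a e c t"
  using kb_periodic[of e "t - c" k] by (simp add: rho_def algebra_simps)

lemma rho_deriv: "(rho a e c has_real_derivative kb' e (t - c) / Dn a e c) (at t)"
proof -
  have "((\<lambda>t. kb e (t - c)) has_real_derivative kb' e (t - c) * 1) (at t)"
    by (rule DERIV_chain2[OF kb_deriv]) (auto intro!: derivative_eq_intros)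
  from DERIV_cdivide[OF this, of "Dn a e c"] show ?thesis
    unfolding rho_def[abs_def] by simp
qed

lemma rho'_cont: "continuous_on UNIV (\<lambda>t. kb' e (t - c) / Dn a e c)"
  unfolding divide_inverse
  by (intro continuous_intros continuous_on_compose2[OF kb'_cont, of _ "\<lambda>t. t - c"]) auto




lemma reduce_period:
  assumes "(p::real) > 0"
  shows "\<exists>k::int. a \<le> t + of_int k * p \<and> t + of_int k * p < a + p"
proof -
  define k where "k = ceiling ((a - t) / p)"
  have "(a - t) / p \<le> of_int k" "of_int k < (a - t) / p + 1"
    unfolding k_def by linarith+
  hence "a - t \<le> of_int k * p" "of_int k * p < a - t + p"
    using assms by (simp_all add: field_simps)
  thus ?thesis by (intro exI[of _ k]) auto
qed

locale S =
  fixes N :: "complex \<Rightarrow> real" and \<gamma> :: "real \<Rightarrow> complex" and \<theta>0 :: real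
  assumes nrm: "strictly_convex_norm N"
    and C1: "C1_away_from_origin N"
    and gdiff: "\<forall>\<theta>. \<gamma> differentiable (at \<theta>)"
    and gC1: "continuous_on UNIV (\<lambda>\<theta>. vector_derivative \<gamma> (at \<theta>))"
    and arcl: "\<forall>\<theta>. norm (vector_derivative \<gamma> (at \<theta>)) = 1"
    and per: "\<forall>\<theta>. \<gamma> (\<theta> + 2 * pi) = \<gamma> \<theta>"
    and bij: "bij_betw \<gamma> {0..<2 * pi} {z. N z = 1}"
    and ccw: "\<forall>\<theta>. Im (cnj (\<gamma> \<theta>) * vector_derivative \<gamma> (at \<theta>)) > 0"
begin

abbreviation gd :: "real \<Rightarrow> complex" where "gd t \<equiv> vector_derivative \<gamma> (at t)"
abbreviation xi :: complex where "xi \<equiv> \<gamma> \<theta>0"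
abbreviation TT :: complex where "TT \<equiv> gd \<theta>0"

lemma isnorm: "is_norm_on_plane N" using nrm by (simp add: strictly_convex_norm_def)
lemma N_zero: "N x = 0 \<longleftrightarrow> x = 0" using isnorm by (simp add: is_norm_on_plane_def)
lemma N_tri: "N (x + y) \<le> N x + N y" using isnorm by (simp add: is_norm_on_plane_def)
lemma N_hom: "N (c *\<^sub>R x) = \<bar>c\<bar> * N x" using isnorm by (simp add: is_norm_on_plane_def)
lemma N_neg: "N (- x) = N x" using N_hom[of "-1" x] by simp
lemma N_nonneg: "N x \<ge> 0"
  using N_tri[of x "-x"] N_zero[of 0] N_neg[of x] by simp

lemma gd_has: "(\<gamma> has_vector_derivative gd t) (at t)"
  using gdiff vector_derivative_works by blast

lemma gd_cont: "isCont gd t"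
  using gC1 by (simp add: continuous_on_eq_continuous_at)

lemma gd_norm: "norm (gd t) = 1" using arcl by simp

interpretation gper: periodic_fun_simple \<gamma> "2 * pi"
  by standard (use per in auto)

lemma gamma_int: "\<gamma> (t + of_int k * (2 * pi)) = \<gamma> t"
  by (rule gper.plus_of_int)

lemma gd_per1: "gd (t + 2 * pi) = gd t"
proof -
  have "((\<lambda>s. s + 2 * pi) has_vector_derivative 1) (at t)"
    by (auto intro!: derivative_eq_intros simp: has_vector_derivative_def)
  from vector_diff_chain_at[OF this gd_has[of "t + 2 * pi"]]
  have "((\<gamma> \<circ> (\<lambda>s. s + 2 * pi)) has_vector_derivative gd (t + 2 * pi)) (at t)" by simp
  moreover have "\<gamma> \<circ> (\<lambda>s. s + 2 * pi) = \<gamma>" using per by (auto simp: fun_eq_iff)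
  ultimately have "(\<gamma> has_vector_derivative gd (t + 2 * pi)) (at t)" by simp
  thus ?thesis by (rule vector_derivative_at[symmetric])
qed

interpretation gdper: periodic_fun_simple gd "2 * pi"
  by standard (rule gd_per1)

lemma gd_int: "gd (t + of_int k * (2 * pi)) = gd t"
  by (rule gdper.plus_of_int)

lemma sphere: "N (\<gamma> t) = 1"
proof -
  obtain k :: int where k: "0 \<le> t + of_int k * (2 * pi)" "t + of_int k * (2 * pi) < 0 + 2 * pi"
    using reduce_period[of "2 * pi" 0 t] by auto
  hence "\<gamma> (t + of_int k * (2 * pi)) \<in> {z. N z = 1}"
    using bij_betwE[OF bij] by auto
  thus ?thesis using gamma_int by simp
qed

lemma onto:
  assumes "N z = 1"
  shows "\<exists>t. a \<le> t \<and> t < a + 2 * pi \<and> \<gamma> t = z"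
proof -
  obtain t0 where t0: "t0 \<in> {0..<2 * pi}" "\<gamma> t0 = z"
    using bij_betw_imp_surj_on[OF bij] assms by (metis (mono_tags, lifting) image_iff mem_Collect_eq)
  obtain k :: int where "a \<le> t0 + of_int k * (2 * pi)" "t0 + of_int k * (2 * pi) < a + 2 * pi"
    using reduce_period[of "2 * pi" a t0] by auto
  thus ?thesis using t0 gamma_int by metis
qed

lemma gamma_eq:
  assumes "\<gamma> s = \<gamma> t"
  shows "\<exists>k::int. t = s + of_int k * (2 * pi)"
proof -
  obtain k1 :: int where k1: "0 \<le> s + of_int k1 * (2 * pi)" "s + of_int k1 * (2 * pi) < 0 + 2 * pi"
    using reduce_period[of "2 * pi" 0 s] by auto
  obtain k2 :: int where k2: "0 \<le> t + of_int k2 * (2 * pi)" "t + of_int k2 * (2 * pi) < 0 + 2 * pi"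
    using reduce_period[of "2 * pi" 0 t] by auto
  have "\<gamma> (s + of_int k1 * (2 * pi)) = \<gamma> (t + of_int k2 * (2 * pi))"
    using assms gamma_int by simp
  hence "s + of_int k1 * (2 * pi) = t + of_int k2 * (2 * pi)"
    using bij_betw_imp_inj_on[OF bij] k1 k2 by (auto simp: inj_on_def)
  hence "t = s + of_int (k1 - k2) * (2 * pi)" by (simp add: algebra_simps)
  thus ?thesis by blast
qed

end



lemma cross_zero:
  fixes a b c d p q :: real
  assumes "a * p + b * q = 0" "c * p + d * q = 0" "p \<noteq> 0 \<or> q \<noteq> 0"
  shows "a * d - b * c = 0"
proof -
  have "(a * d - b * c) * p = d * (a * p + b * q) - b * (c * p + d * q)" by (simp add: algebra_simps)
  hence 1: "(a * d - b * c) * p = 0" using assms by simp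
  have "(a * d - b * c) * q = c * (-(a * p + b * q)) + a * (c * p + d * q)" by (simp add: algebra_simps)
  hence 2: "(a * d - b * c) * q = 0" using assms by simp
  show ?thesis using 1 2 assms(3) by auto
qed

lemma tangent_alg:
  fixes u v w x :: complex
  assumes "w \<noteq> 0" "u \<bullet> w = 0" "v \<bullet> w = 0" "norm u = 1" "norm v = 1"
    "Im (cnj x * u) > 0" "Im (cnj x * v) < 0"
  shows "v = - u"
proof -
  have cr: "Im (cnj u * v) = 0"
    using cross_zero[of "Re u" "Re w" "Im u" "Im w" "Re v" "Im v"] assms(1,2,3)
    by (auto simp: inner_complex_def complex_eq_iff algebra_simps)
  define s where "s = Re (cnj u * v)"
  have cs: "cnj u * v = complex_of_real s" using cr by (simp add: s_def complex_eq_iff)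
  have uu: "u * cnj u = 1" using assms(4)
    by (metis complex_norm_square mult.commute of_real_1 power_one)
  have vs: "v = complex_of_real s * u"
    using uu cs by (metis mult.assoc mult.commute mult.left_neutral)
  have "norm v = \<bar>s\<bar>" using vs assms(4) by (simp add: norm_mult)
  hence "\<bar>s\<bar> = 1" using assms(5) by simp
  hence "s = 1 \<or> s = -1" by auto
  moreover have "s \<noteq> 1"
  proof
    assume "s = 1"
    hence "v = u" using vs by simp
    thus False using assms(6,7) by simp
  qed
  ultimately show ?thesis using vs by auto
qed




context S begin

lemma xi_ne0: "xi \<noteq> 0"
proof
  assume "xi = 0"
  hence "N xi = 0" using N_zero[of xi] by simp
  thus False using sphere[of \<theta>0] by simp
qed

lemma th1_ex: "\<exists>t. \<theta>0 < t \<and> t < \<theta>0 + 2 * pi \<and> \<gamma> t = - xi"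
proof -
  have "N (- xi) = 1" using sphere N_neg by simp
  then obtain t where t: "\<theta>0 \<le> t" "t < \<theta>0 + 2 * pi" "\<gamma> t = - xi" using onto by blast
  have "t \<noteq> \<theta>0"
  proof
    assume "t = \<theta>0"
    hence "xi = - xi" using t(3) by simp
    hence "xi = 0" by (simp add: equal_neg_zero)
    thus False using xi_ne0 by simp
  qed
  thus ?thesis using t by (intro exI[of _ t]) auto
qed

definition th1 :: real where "th1 = (SOME t. \<theta>0 < t \<and> t < \<theta>0 + 2 * pi \<and> \<gamma> t = - xi)"

lemma th1: "\<theta>0 < th1" "th1 < \<theta>0 + 2 * pi" "\<gamma> th1 = - xi"
  using someI_ex[OF th1_ex] unfolding th1_def[symmetric] by auto

definition grad :: "complex \<Rightarrow> complex" where
  "grad = (SOME g. (\<forall>x. x \<noteq> 0 \<longrightarrow> (N has_derivative (\<lambda>h. g x \<bullet> h)) (at x)) \<and> continuous_on (- {0}) g)"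

lemma grad_has: "x \<noteq> 0 \<Longrightarrow> (N has_derivative (\<lambda>h. grad x \<bullet> h)) (at x)"
  using someI_ex[OF C1[unfolded C1_away_from_origin_def]] unfolding grad_def[symmetric] by auto

lemma gamma_ne0: "\<gamma> t \<noteq> 0"
proof
  assume "\<gamma> t = 0"
  hence "N (\<gamma> t) = 0" using N_zero[of "\<gamma> t"] by simp
  thus False using sphere[of t] by simp
qed

lemma grad_tangent: "grad (\<gamma> t) \<bullet> gd t = 0"
proof -
  have g1: "(\<gamma> has_derivative (\<lambda>h. h *\<^sub>R gd t)) (at t)"
    using gd_has by (simp add: has_vector_derivative_def)
  have "((N \<circ> \<gamma>) has_derivative ((\<lambda>h. grad (\<gamma> t) \<bullet> h) \<circ> (\<lambda>h. h *\<^sub>R gd t))) (at t)"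
    by (rule diff_chain_at[OF g1 grad_has[OF gamma_ne0]])
  moreover have "N \<circ> \<gamma> = (\<lambda>_. 1)" using sphere by (auto simp: fun_eq_iff)
  ultimately have "((\<lambda>_. 1::real) has_derivative ((\<lambda>h. grad (\<gamma> t) \<bullet> h) \<circ> (\<lambda>h. h *\<^sub>R gd t))) (at t)"
    by simp
  moreover have "((\<lambda>_. 1::real) has_derivative (\<lambda>h. 0)) (at t)" by (rule has_derivative_const)
  ultimately have "((\<lambda>h. grad (\<gamma> t) \<bullet> h) \<circ> (\<lambda>h. h *\<^sub>R gd t)) = (\<lambda>h. 0)"
    by (rule has_derivative_unique)
  from fun_cong[OF this, of 1] show ?thesis by simp
qed

lemma grad_neg:
  assumes "p \<noteq> 0" shows "grad (- p) = - grad p"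
proof -
  have m: "(uminus has_derivative uminus) (at p)" by (rule has_derivative_minus[OF has_derivative_ident])
  have "((N \<circ> uminus) has_derivative ((\<lambda>h. grad (- p) \<bullet> h) \<circ> uminus)) (at p)"
    by (rule diff_chain_at[OF m grad_has]) (use assms in auto)
  moreover have "N \<circ> uminus = N" using N_neg by (auto simp: fun_eq_iff)
  ultimately have "(N has_derivative ((\<lambda>h. grad (- p) \<bullet> h) \<circ> uminus)) (at p)" by simp
  from has_derivative_unique[OF this grad_has[OF assms]]
  have e: "\<And>h. grad (- p) \<bullet> (- h) = grad p \<bullet> h" by (metis comp_apply)
  define h where "h = grad p + grad (- p)"
  have "h \<bullet> h = 0" using e[of h] unfolding h_def by (simp add: inner_add_left inner_add_right algebra_simps)
  hence "h = 0" by simp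
  thus ?thesis unfolding h_def by (simp add: add_eq_0_iff)
qed

lemma grad_euler:
  assumes "N p = 1" shows "grad p \<bullet> p = 1"
proof -
  have p0: "p \<noteq> 0"
  proof
    assume "p = 0"
    hence "N p = 0" using N_zero[of p] by simp
    thus False using assms by simp
  qed
  have l: "((\<lambda>s::real. s *\<^sub>R p) has_derivative (\<lambda>h. h *\<^sub>R p)) (at 1)"
    by (rule bounded_linear_imp_has_derivative) (rule bounded_linear_scaleR_left)
  have gp: "(N has_derivative (\<lambda>h. grad p \<bullet> h)) (at ((\<lambda>s::real. s *\<^sub>R p) 1))"
    using grad_has[OF p0] by simp
  have c: "((N \<circ> (\<lambda>s::real. s *\<^sub>R p)) has_derivative ((\<lambda>h. grad p \<bullet> h) \<circ> (\<lambda>h. h *\<^sub>R p))) (at 1)"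
    by (rule diff_chain_at[OF l gp])
  have fe: "((\<lambda>h. grad p \<bullet> h) \<circ> (\<lambda>h. h *\<^sub>R p)) = (*) (grad p \<bullet> p)"
    by (auto simp: fun_eq_iff)
  have d1: "((\<lambda>s. N (s *\<^sub>R p)) has_real_derivative (grad p \<bullet> p)) (at 1)"
    unfolding has_field_derivative_def using c fe by (simp add: o_def)
  have ev0: "eventually (\<lambda>s::real. 0 < s) (nhds 1)"
    using order_tendstoD(1)[OF filterlim_ident[of "nhds (1::real)"], of 0] by simp
  have ev: "eventually (\<lambda>s::real. N (s *\<^sub>R p) = s) (nhds 1)"
    using ev0 by eventually_elim (simp add: N_hom assms)
  have "((\<lambda>s. N (s *\<^sub>R p)) has_real_derivative 1) (at 1) \<longleftrightarrow> ((\<lambda>s. s) has_real_derivative 1) (at 1)"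
    by (rule DERIV_cong_ev[OF refl ev refl])
  hence d2: "((\<lambda>s. N (s *\<^sub>R p)) has_real_derivative 1) (at 1)" by simp
  show ?thesis using DERIV_unique[OF d1 d2] .
qed

lemma gd_th1: "gd th1 = - TT"
proof (rule tangent_alg[where w = "grad xi" and x = xi])
  show "grad xi \<noteq> 0" using grad_euler[OF sphere[of \<theta>0]] by auto
  show "TT \<bullet> grad xi = 0" using grad_tangent[of \<theta>0] by (simp add: inner_commute)
  have "grad (\<gamma> th1) \<bullet> gd th1 = 0" by (rule grad_tangent)
  thus "gd th1 \<bullet> grad xi = 0" using th1(3) grad_neg[OF xi_ne0] by (simp add: inner_commute)
  show "norm TT = 1" "norm (gd th1) = 1" by (simp_all add: gd_norm)
  show "Im (cnj xi * TT) > 0" using ccw by simp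
  have "Im (cnj (\<gamma> th1) * gd th1) > 0" using ccw by simp
  thus "Im (cnj xi * gd th1) < 0" using th1(3) by simp
qed

end



lemma parallel_alg:
  fixes z x :: complex
  assumes "z \<bullet> (\<i> * x) = 0" "x \<noteq> 0"
  shows "z = ((z \<bullet> x) / (x \<bullet> x)) *\<^sub>R x"
proof -
  define a where "a = Re x" define b where "b = Im x"
  define c where "c = Re z" define d where "d = Im z"
  have h: "a * d = b * c" using assms(1) by (simp add: inner_complex_def a_def b_def c_def d_def algebra_simps)
  have xx: "x \<bullet> x = a^2 + b^2" by (simp add: inner_complex_def a_def b_def power2_eq_square)
  have zx: "z \<bullet> x = c * a + d * b" by (simp add: inner_complex_def a_def b_def c_def d_def)
  have pos: "a^2 + b^2 \<noteq> 0" using assms(2) by (simp add: a_def b_def complex_eq_iff)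
  have e1: "c * (a^2 + b^2) = (c * a + d * b) * a"
  proof -
    have "c * (a^2 + b^2) - (c * a + d * b) * a = b * (b * c - a * d)" by (simp add: algebra_simps power2_eq_square)
    thus ?thesis using h by simp
  qed
  have e2: "d * (a^2 + b^2) = (c * a + d * b) * b"
  proof -
    have "d * (a^2 + b^2) - (c * a + d * b) * b = a * (a * d - b * c)" by (simp add: algebra_simps power2_eq_square)
    thus ?thesis using h by simp
  qed
  have r1: "c = (c * a + d * b) / (a^2 + b^2) * a"
    using e1 pos by (simp add: eq_divide_eq)
  have r2: "d = (c * a + d * b) / (a^2 + b^2) * b"
    using e2 pos by (simp add: eq_divide_eq)
  show ?thesis
    unfolding xx zx complex_eq_iff
    using r1 r2 by (simp add: a_def b_def c_def d_def)
qed

lemma int_gap: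
  fixes k :: int
  assumes "0 < of_int k * (2 * pi)" "of_int k * (2 * pi) < 2 * pi"
  shows False
proof -
  have p: "0 < 2 * pi" by simp
  have "0 < (of_int k :: real)" using assms(1) p by (simp add: zero_less_mult_iff)
  hence "0 < k" by simp
  moreover have "(of_int k :: real) < 1" using assms(2) p by (simp add: mult_less_cancel_right1)
  hence "k < 1" by simp
  ultimately show False by simp
qed

lemma int_gap2:
  fixes k :: int
  assumes "- 2 * pi < of_int k * (2 * pi)" "of_int k * (2 * pi) < 0"
  shows False
proof -
  have p: "0 < 2 * pi" by simp
  have "(of_int k :: real) < 0" using assms(2) p by (simp add: mult_less_0_iff)
  hence "k < 0" by simp
  moreover have "-1 < (of_int k :: real)"
  proof -
    have "(-1) * (2 * pi) < of_int k * (2 * pi)" using assms(1) by simp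
    thus ?thesis by (rule mult_right_less_imp_less) (use p in simp)
  qed
  hence "-1 < k" by simp
  ultimately show False by simp
qed

context S begin

abbreviation hh :: "real \<Rightarrow> real" where "hh t \<equiv> \<gamma> t \<bullet> (\<i> * xi)"

lemma hh_zero_pts:
  assumes "hh t = 0"
  shows "\<gamma> t = xi \<or> \<gamma> t = - xi"
proof -
  define s where "s = (\<gamma> t \<bullet> xi) / (xi \<bullet> xi)"
  have z: "\<gamma> t = s *\<^sub>R xi" using parallel_alg[OF assms xi_ne0] s_def by simp
  have "N (\<gamma> t) = \<bar>s\<bar> * N xi" using z N_hom by simp
  hence "\<bar>s\<bar> = 1" using sphere[of t] sphere[of \<theta>0] by simp
  hence "s = 1 \<or> s = -1" by linarith
  thus ?thesis using z by auto
qed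

lemma hh_zero:
  assumes "hh t = 0"
  shows "\<exists>k::int. t = \<theta>0 + of_int k * (2 * pi) \<or> t = th1 + of_int k * (2 * pi)"
proof -
  from hh_zero_pts[OF assms] show ?thesis
  proof
    assume "\<gamma> t = xi"
    then obtain k :: int where "t = \<theta>0 + of_int k * (2 * pi)" using gamma_eq[of \<theta>0 t] by auto
    thus ?thesis by blast
  next
    assume "\<gamma> t = - xi"
    hence "\<gamma> th1 = \<gamma> t" using th1(3) by simp
    then obtain k :: int where "t = th1 + of_int k * (2 * pi)" using gamma_eq[of th1 t] by auto
    thus ?thesis by blast
  qed
qed

lemma hh_deriv: "(hh has_real_derivative (gd t \<bullet> (\<i> * xi))) (at t)"
proof -
  have g1: "(\<gamma> has_derivative (\<lambda>h. h *\<^sub>R gd t)) (at t)"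
    using gd_has by (simp add: has_vector_derivative_def)
  have "((\<lambda>s. \<gamma> s \<bullet> (\<i> * xi)) has_derivative (\<lambda>h. (h *\<^sub>R gd t) \<bullet> (\<i> * xi))) (at t)"
    by (rule has_derivative_inner_left[OF g1])
  moreover have "(\<lambda>h. (h *\<^sub>R gd t) \<bullet> (\<i> * xi)) = (*) (gd t \<bullet> (\<i> * xi))"
    by (auto simp: fun_eq_iff)
  ultimately show ?thesis by (simp add: has_field_derivative_def)
qed

lemma hh_cont: "isCont hh t" using hh_deriv by (rule DERIV_isCont)

lemma TT_ixi: "TT \<bullet> (\<i> * xi) = Im (cnj xi * TT)"
  by (simp add: inner_complex_def algebra_simps)

lemma hh_th0: "hh \<theta>0 = 0" by (simp add: inner_complex_def algebra_simps)
lemma hh_th1: "hh th1 = 0" using th1(3) by (simp add: inner_complex_def algebra_simps)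

lemma no_zero_1: "\<theta>0 < t \<Longrightarrow> t < th1 \<Longrightarrow> hh t \<noteq> 0"
proof
  assume a: "\<theta>0 < t" "t < th1" "hh t = 0"
  then obtain k :: int where k: "t = \<theta>0 + of_int k * (2 * pi) \<or> t = th1 + of_int k * (2 * pi)"
    using hh_zero by blast
  show False
  proof (cases "t = \<theta>0 + of_int k * (2 * pi)")
    case True
    hence "0 < of_int k * (2 * pi)" "of_int k * (2 * pi) < 2 * pi" using a th1 by linarith+
    thus False by (rule int_gap)
  next
    case False
    hence t: "t = th1 + of_int k * (2 * pi)" using k by simp
    hence "- 2 * pi < of_int k * (2 * pi)" "of_int k * (2 * pi) < 0" using a th1 by linarith+
    thus False by (rule int_gap2)
  qed
qed

lemma no_zero_2: "th1 < t \<Longrightarrow> t < \<theta>0 + 2 * pi \<Longrightarrow> hh t \<noteq> 0"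
proof
  assume a: "th1 < t" "t < \<theta>0 + 2 * pi" "hh t = 0"
  then obtain k :: int where k: "t = \<theta>0 + of_int k * (2 * pi) \<or> t = th1 + of_int k * (2 * pi)"
    using hh_zero by blast
  show False
  proof (cases "t = \<theta>0 + of_int k * (2 * pi)")
    case True
    hence "0 < of_int k * (2 * pi)" "of_int k * (2 * pi) < 2 * pi" using a th1 by linarith+
    thus False by (rule int_gap)
  next
    case False
    hence t: "t = th1 + of_int k * (2 * pi)" using k by simp
    hence "0 < of_int k * (2 * pi)" "of_int k * (2 * pi) < 2 * pi" using a th1 by linarith+
    thus False by (rule int_gap)
  qed
qed

lemma hh_pos:
  assumes "\<theta>0 < t" "t < th1"
  shows "hh t > 0"
proof (rule ccontr)
  assume neg: "\<not> hh t > 0"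
  have "0 < gd \<theta>0 \<bullet> (\<i> * xi)" using TT_ixi ccw by simp
  from DERIV_pos_inc_right[OF hh_deriv this]
  obtain d where d: "d > 0" "\<And>s. s > 0 \<Longrightarrow> s < d \<Longrightarrow> hh \<theta>0 < hh (\<theta>0 + s)" by blast
  define s where "s = min (d / 2) ((t - \<theta>0) / 2)"
  have s0: "s \<le> (t - \<theta>0) / 2" "s \<le> d / 2" unfolding s_def by (rule min.cobounded2, rule min.cobounded1)
  have s: "0 < s" "s < d" "\<theta>0 + s < t" using d assms s0 by (auto simp: s_def)
  have p: "hh (\<theta>0 + s) > 0" using d(2)[OF s(1,2)] hh_th0 by simp
  obtain x where x: "\<theta>0 + s \<le> x" "x \<le> t" "hh x = 0"
  proof -
    have "\<exists>x. \<theta>0 + s \<le> x \<and> x \<le> t \<and> hh x = 0"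
      by (rule IVT2[of hh t 0 "\<theta>0 + s"]) (use p neg s hh_cont in auto)
    thus ?thesis using that by blast
  qed
  thus False using no_zero_1[of x] s assms by auto
qed

lemma hh_neg:
  assumes "th1 < t" "t < \<theta>0 + 2 * pi"
  shows "hh t < 0"
proof (rule ccontr)
  assume neg: "\<not> hh t < 0"
  have "gd th1 \<bullet> (\<i> * xi) < 0" using TT_ixi ccw gd_th1 by simp
  from DERIV_neg_dec_right[OF hh_deriv this]
  obtain d where d: "d > 0" "\<And>s. s > 0 \<Longrightarrow> s < d \<Longrightarrow> hh th1 > hh (th1 + s)" by blast
  define s where "s = min (d / 2) ((t - th1) / 2)"
  have s0: "s \<le> (t - th1) / 2" "s \<le> d / 2" unfolding s_def by (rule min.cobounded2, rule min.cobounded1)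
  have s: "0 < s" "s < d" "th1 + s < t" using d assms s0 by (auto simp: s_def)
  have p: "hh (th1 + s) < 0" using d(2)[OF s(1,2)] hh_th1 by simp
  obtain x where x: "th1 + s \<le> x" "x \<le> t" "hh x = 0"
  proof -
    have "\<exists>x. th1 + s \<le> x \<and> x \<le> t \<and> hh x = 0"
      by (rule IVT[of hh "th1 + s" 0 t]) (use p neg s hh_cont in auto)
    thus ?thesis using that by blast
  qed
  thus False using no_zero_2[of x] s assms by auto
qed

end



lemma int_scaleR_left:
  "f integrable_on A \<Longrightarrow> integral A (\<lambda>x. f x *\<^sub>R c) = integral A f *\<^sub>R c"
  by (rule integral_unique, rule has_integral_scaleR_left, rule integrable_integral)

lemma int_mult_left:
  fixes f :: "real \<Rightarrow> real"
  shows "f integrable_on A \<Longrightarrow> integral A (\<lambda>x. f x * c) = integral A f * c"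
  by (rule integral_unique, rule has_integral_mult_left, rule integrable_integral)

context S begin

definition Lop :: "(real \<Rightarrow> real) \<Rightarrow> complex" where
  "Lop u = integral {\<theta>0..\<theta>0 + 2 * pi} (\<lambda>t. u t *\<^sub>R gd t)"

lemma gd_cont_on: "continuous_on A gd"
  using gC1 continuous_on_subset by blast

lemma int_sc:
  assumes cu: "continuous_on UNIV u"
  shows "(\<lambda>t. u t *\<^sub>R gd t) integrable_on {a..b}"
proof -
  have "continuous_on {a..b} u" using continuous_on_subset[OF cu] by simp
  hence "continuous_on {a..b} (\<lambda>t. u t *\<^sub>R gd t)" using gd_cont_on by (rule continuous_on_scaleR)
  thus ?thesis by (rule integrable_continuous_interval)
qed

lemma gin_deriv: "((\<lambda>s. \<gamma> s \<bullet> w) has_real_derivative (gd t \<bullet> w)) (at t)"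
proof -
  have g1: "(\<gamma> has_derivative (\<lambda>h. h *\<^sub>R gd t)) (at t)"
    using gd_has by (simp add: has_vector_derivative_def)
  have "((\<lambda>s. \<gamma> s \<bullet> w) has_derivative (\<lambda>h. (h *\<^sub>R gd t) \<bullet> w)) (at t)"
    by (rule has_derivative_inner_left[OF g1])
  moreover have "(\<lambda>h. (h *\<^sub>R gd t) \<bullet> w) = (*) (gd t \<bullet> w)"
    by (auto simp: fun_eq_iff)
  ultimately show ?thesis by (simp add: has_field_derivative_def)
qed

lemma bump_lim:
  assumes "\<epsilon> > 0"
  shows "\<exists>\<eta>>0. \<forall>\<delta> c'. 0 < \<delta> \<and> \<delta> < \<eta> \<and> \<bar>c' - c\<bar> < \<eta> \<longrightarrow> norm (Lop (rho \<theta>0 \<delta> c') - gd c) \<le> \<epsilon>"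
proof -
  obtain \<eta>0 where \<eta>0: "\<eta>0 > 0" "\<And>t. dist t c < \<eta>0 \<Longrightarrow> dist (gd t) (gd c) < \<epsilon>"
    using gd_cont[of c] assms unfolding continuous_at_eps_delta by blast
  define \<eta> where "\<eta> = min (\<eta>0 / 2) pi"
  have \<eta>: "\<eta> > 0" "\<eta> \<le> pi" "2 * \<eta> \<le> \<eta>0" using \<eta>0 by (auto simp: \<eta>_def)
  show ?thesis
  proof (intro exI[of _ \<eta>] conjI allI impI \<eta>(1))
    fix \<delta> c'
    assume a: "0 < \<delta> \<and> \<delta> < \<eta> \<and> \<bar>c' - c\<bar> < \<eta>"
    hence d: "0 < \<delta>" "\<delta> \<le> pi" using \<eta> by auto
    define r where "r = rho \<theta>0 \<delta> c'"
    have rc: "continuous_on UNIV r" unfolding r_def by (rule rho_cont)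
    have rn: "\<And>t. r t \<ge> 0" unfolding r_def using rho_nonneg[OF d] by blast
    have r1: "integral {\<theta>0..\<theta>0 + 2 * pi} r = 1" unfolding r_def by (rule rho_int[OF d])
    have ri: "r integrable_on {\<theta>0..\<theta>0 + 2 * pi}"
      by (rule integrable_continuous_interval) (rule continuous_on_subset[OF rc], simp)
    have close: "norm (gd t - gd c) < \<epsilon>" if "r t \<noteq> 0" for t
    proof -
      have "kb \<delta> (t - c') \<noteq> 0" using that by (simp add: r_def rho_def)
      then obtain k :: int where k: "\<bar>t - c' - of_int k * (2 * pi)\<bar> < \<delta>"
        using kb_window[OF d] by blast
      have "\<bar>(t + of_int (- k) * (2 * pi)) - c\<bar> < \<eta>0" using k a \<eta> by auto
      hence "dist (gd (t + of_int (- k) * (2 * pi))) (gd c) < \<epsilon>" using \<eta>0(2) by (simp add: dist_real_def)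
      thus ?thesis unfolding gd_int by (simp add: dist_norm)
    qed
    have i1: "(\<lambda>t. r t *\<^sub>R gd t) integrable_on {\<theta>0..\<theta>0 + 2 * pi}" by (rule int_sc[OF rc])
    have i2: "(\<lambda>t. r t *\<^sub>R gd c) integrable_on {\<theta>0..\<theta>0 + 2 * pi}"
      using ri by (rule integrable_on_scaleR_left)
    have "integral {\<theta>0..\<theta>0 + 2 * pi} (\<lambda>t. r t *\<^sub>R gd c) = gd c"
      using r1 int_scaleR_left[OF ri] by simp
    hence eq: "Lop r - gd c = integral {\<theta>0..\<theta>0 + 2 * pi} (\<lambda>t. r t *\<^sub>R (gd t - gd c))"
      unfolding Lop_def using integral_diff[OF i1 i2] by (simp add: scaleR_diff_right)
    have "norm (integral {\<theta>0..\<theta>0 + 2 * pi} (\<lambda>t. r t *\<^sub>R (gd t - gd c)))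
          \<le> integral {\<theta>0..\<theta>0 + 2 * pi} (\<lambda>t. r t * \<epsilon>)"
    proof (rule integral_norm_bound_integral)
      show "(\<lambda>t. r t *\<^sub>R (gd t - gd c)) integrable_on {\<theta>0..\<theta>0 + 2 * pi}"
        using integrable_diff[OF i1 i2] by (simp add: scaleR_diff_right)
      show "(\<lambda>t. r t * \<epsilon>) integrable_on {\<theta>0..\<theta>0 + 2 * pi}"
        using ri by (rule integrable_on_mult_left)
      fix t
      show "norm (r t *\<^sub>R (gd t - gd c)) \<le> r t * \<epsilon>"
      proof (cases "r t = 0")
        case True thus ?thesis by simp
      next
        case False
        have "norm (r t *\<^sub>R (gd t - gd c)) = r t * norm (gd t - gd c)" using rn[of t] by simp
        also have "\<dots> \<le> r t * \<epsilon>" using close[OF False] rn[of t] by (intro mult_left_mono) auto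
        finally show ?thesis .
      qed
    qed
    also have "\<dots> = \<epsilon>" using r1 int_mult_left[OF ri] by simp
    finally show "norm (Lop (rho \<theta>0 \<delta> c') - gd c) \<le> \<epsilon>" using eq r_def by simp
  qed
qed

end



lemma perp_both_zero:
  fixes x n :: complex
  assumes "x \<bullet> n = 0" "(\<i> * x) \<bullet> n = 0" "x \<noteq> 0"
  shows "n = 0"
proof -
  define a where "a = Re x" define b where "b = Im x"
  define p where "p = Re n" define q where "q = Im n"
  have h1: "a * p + b * q = 0" using assms(1) by (simp add: inner_complex_def a_def b_def p_def q_def)
  have h2: "- b * p + a * q = 0" using assms(2) by (simp add: inner_complex_def a_def b_def p_def q_def)
  have pos: "a^2 + b^2 \<noteq> 0" using assms(3) by (simp add: a_def b_def complex_eq_iff)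
  have "(a^2 + b^2) * p = a * (a * p + b * q) - b * (- b * p + a * q)" by (simp add: algebra_simps power2_eq_square)
  hence "(a^2 + b^2) * p = 0" using h1 h2 by simp
  hence p0: "p = 0" using pos by (metis mult_eq_0_iff)
  have "(a^2 + b^2) * q = b * (a * p + b * q) + a * (- b * p + a * q)" by (simp add: algebra_simps power2_eq_square)
  hence "(a^2 + b^2) * q = 0" using h1 h2 by simp
  hence q0: "q = 0" using pos by (metis mult_eq_0_iff)
  show ?thesis using p0 q0 by (simp add: complex_eq_iff p_def q_def)
qed

context S begin

lemma exists_c:
  assumes "n \<noteq> 0" shows "\<exists>c. gd c \<bullet> n \<noteq> 0"
proof (rule ccontr)
  assume "\<not> (\<exists>c. gd c \<bullet> n \<noteq> 0)"
  hence z: "\<And>c. gd c \<bullet> n = 0" by auto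
  have const: "\<gamma> x \<bullet> n = \<gamma> y \<bullet> n" for x y
    by (rule DERIV_isconst_all) (use gin_deriv[of n] z in simp)
  have "\<gamma> th1 \<bullet> n = xi \<bullet> n" by (rule const)
  hence x0: "xi \<bullet> n = 0" using th1(3) by (simp add: inner_minus_left)
  have ix0: "\<i> * xi \<noteq> 0" using xi_ne0 by simp
  have Np: "N (\<i> * xi) \<noteq> 0"
  proof
    assume "N (\<i> * xi) = 0"
    hence "\<i> * xi = 0" using N_zero[of "\<i> * xi"] by simp
    thus False using ix0 by simp
  qed
  define w0 where "w0 = (1 / N (\<i> * xi)) *\<^sub>R (\<i> * xi)"
  have "N w0 = 1" unfolding w0_def N_hom using Np N_nonneg[of "\<i> * xi"] by simp
  then obtain t where t: "\<gamma> t = w0" using onto[of w0 0] by blast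
  have "w0 \<bullet> n = 0" using const[of t \<theta>0] x0 t by simp
  hence "(1 / N (\<i> * xi)) * ((\<i> * xi) \<bullet> n) = 0" unfolding w0_def by (simp add: inner_scaleR_left)
  hence "(\<i> * xi) \<bullet> n = 0" using Np by simp
  hence "n = 0" using perp_both_zero[OF x0 _ xi_ne0] by simp
  thus False using assms by simp
qed

lemma exists_u:
  assumes "n \<noteq> 0" shows "\<exists>e c. 0 < e \<and> e \<le> pi \<and> Lop (rho \<theta>0 e c) \<bullet> n \<noteq> 0"
proof -
  obtain c where c: "gd c \<bullet> n \<noteq> 0" using exists_c[OF assms] by blast
  define \<epsilon> where "\<epsilon> = \<bar>gd c \<bullet> n\<bar> / (2 * norm n)"
  have \<epsilon>: "\<epsilon> > 0" using c assms by (simp add: \<epsilon>_def)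
  obtain \<eta> where \<eta>: "\<eta> > 0" "\<And>\<delta> c'. 0 < \<delta> \<and> \<delta> < \<eta> \<and> \<bar>c' - c\<bar> < \<eta> \<Longrightarrow> norm (Lop (rho \<theta>0 \<delta> c') - gd c) \<le> \<epsilon>"
    using bump_lim[OF \<epsilon>, of c] by blast
  define \<delta> where "\<delta> = min (\<eta> / 2) pi"
  have d: "0 < \<delta>" "\<delta> \<le> pi" "\<delta> < \<eta>" using \<eta> by (auto simp: \<delta>_def)
  have b: "norm (Lop (rho \<theta>0 \<delta> c) - gd c) \<le> \<epsilon>" using \<eta>(2)[of \<delta> c] d \<eta> by simp
  have "\<bar>(Lop (rho \<theta>0 \<delta> c) - gd c) \<bullet> n\<bar> \<le> norm (Lop (rho \<theta>0 \<delta> c) - gd c) * norm n"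
    by (rule Cauchy_Schwarz_ineq2)
  also have "\<dots> \<le> \<epsilon> * norm n" using b by (simp add: mult_right_mono)
  also have "\<dots> = \<bar>gd c \<bullet> n\<bar> / 2" using assms by (simp add: \<epsilon>_def)
  finally have *: "\<bar>(Lop (rho \<theta>0 \<delta> c) - gd c) \<bullet> n\<bar> \<le> \<bar>gd c \<bullet> n\<bar> / 2" .
  have "Lop (rho \<theta>0 \<delta> c) \<bullet> n \<noteq> 0"
  proof
    assume "Lop (rho \<theta>0 \<delta> c) \<bullet> n = 0"
    hence "\<bar>gd c \<bullet> n\<bar> \<le> \<bar>gd c \<bullet> n\<bar> / 2" using * by (simp add: inner_diff_left)
    thus False using c by simp
  qed
  thus ?thesis using d by blast
qed

lemma part_bound:
  assumes "0 < e" "e \<le> pi" "s \<le> \<theta>0 + 2 * pi"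
  shows "norm (integral {\<theta>0..s} (\<lambda>t. rho \<theta>0 e c t *\<^sub>R gd t)) \<le> 1"
proof -
  have rc: "continuous_on UNIV (rho \<theta>0 e c)" by (rule rho_cont)
  have ri: "rho \<theta>0 e c integrable_on {a..b}" for a b
    by (rule integrable_continuous_interval) (rule continuous_on_subset[OF rc], simp)
  have "norm (integral {\<theta>0..s} (\<lambda>t. rho \<theta>0 e c t *\<^sub>R gd t)) \<le> integral {\<theta>0..s} (rho \<theta>0 e c)"
  proof (rule integral_norm_bound_integral)
    show "(\<lambda>t. rho \<theta>0 e c t *\<^sub>R gd t) integrable_on {\<theta>0..s}" by (rule int_sc[OF rc])
    show "rho \<theta>0 e c integrable_on {\<theta>0..s}" by (rule ri)
    fix t show "norm (rho \<theta>0 e c t *\<^sub>R gd t) \<le> rho \<theta>0 e c t"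
      using rho_nonneg[OF assms(1,2)] gd_norm by simp
  qed
  also have "\<dots> \<le> integral {\<theta>0..\<theta>0 + 2 * pi} (rho \<theta>0 e c)"
    by (rule integral_subset_le) (use assms ri rho_nonneg[OF assms(1,2)] in auto)
  also have "\<dots> = 1" by (rule rho_int[OF assms(1,2)])
  finally show ?thesis .
qed

lemma Lop_lin:
  assumes "continuous_on UNIV u" "continuous_on UNIV v"
  shows "Lop (\<lambda>t. a * u t + b * v t) = a *\<^sub>R Lop u + b *\<^sub>R Lop v"
proof -
  have fe: "(\<lambda>t. (a * u t + b * v t) *\<^sub>R gd t) = (\<lambda>t. a *\<^sub>R (u t *\<^sub>R gd t) + b *\<^sub>R (v t *\<^sub>R gd t))"
    by (auto simp: fun_eq_iff scaleR_add_left)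
  have "Lop (\<lambda>t. a * u t + b * v t) = integral {\<theta>0..\<theta>0 + 2 * pi} (\<lambda>t. a *\<^sub>R (u t *\<^sub>R gd t) + b *\<^sub>R (v t *\<^sub>R gd t))"
    unfolding Lop_def fe ..
  also have "\<dots> = integral {\<theta>0..\<theta>0 + 2 * pi} (\<lambda>t. a *\<^sub>R (u t *\<^sub>R gd t)) + integral {\<theta>0..\<theta>0 + 2 * pi} (\<lambda>t. b *\<^sub>R (v t *\<^sub>R gd t))"
    by (rule integral_add[OF integrable_cmul[OF int_sc[OF assms(1)]] integrable_cmul[OF int_sc[OF assms(2)]]])
  also have "\<dots> = a *\<^sub>R Lop u + b *\<^sub>R Lop v" unfolding Lop_def by (simp only: integral_cmul)
  finally show ?thesis .
qed

end

locale S2 = S +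
  fixes ea ca eb cb :: real
  assumes ea: "0 < ea" "ea \<le> pi" and eb: "0 < eb" "eb \<le> pi"
    and crn: "Lop (rho \<theta>0 eb cb) \<bullet> (\<i> * Lop (rho \<theta>0 ea ca)) \<noteq> 0"

lemma (in S) S2_ex: "\<exists>ea ca eb cb. S2 N \<gamma> \<theta>0 ea ca eb cb"
proof -
  obtain ea ca where a: "0 < ea" "ea \<le> pi" "Lop (rho \<theta>0 ea ca) \<bullet> 1 \<noteq> 0"
    using exists_u[of 1] by auto
  have "Lop (rho \<theta>0 ea ca) \<noteq> 0" using a(3) by auto
  hence "\<i> * Lop (rho \<theta>0 ea ca) \<noteq> 0" by simp
  then obtain eb cb where b: "0 < eb" "eb \<le> pi" "Lop (rho \<theta>0 eb cb) \<bullet> (\<i> * Lop (rho \<theta>0 ea ca)) \<noteq> 0"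
    using exists_u by blast
  have "S2 N \<gamma> \<theta>0 ea ca eb cb"
    unfolding S2_def S2_axioms_def using S_axioms a b by blast
  thus ?thesis by blast
qed

context S2 begin

abbreviation ua where "ua \<equiv> rho \<theta>0 ea ca"
abbreviation ub where "ub \<equiv> rho \<theta>0 eb cb"
abbreviation Wa where "Wa \<equiv> Lop ua"
abbreviation Wb where "Wb \<equiv> Lop ub"
definition cr where "cr = Wb \<bullet> (\<i> * Wa)"
definition alpha where "alpha w = - (w \<bullet> (\<i> * Wb)) / cr"
definition beta where "beta w = (w \<bullet> (\<i> * Wa)) / cr"
definition corr where "corr w t = alpha w * ua t + beta w * ub t"

lemma cr_ne: "cr \<noteq> 0" using crn by (simp add: cr_def)

lemma decomp: "alpha w *\<^sub>R Wa + beta w *\<^sub>R Wb = w"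
proof -
  define a where "a = Re Wa" define b where "b = Im Wa"
  define c where "c = Re Wb" define d where "d = Im Wb"
  define x where "x = Re w" define y where "y = Im w"
  have crv: "cr = a * d - b * c" by (simp add: cr_def inner_complex_def a_def b_def c_def d_def algebra_simps)
  have al: "alpha w = (x * d - y * c) / cr"
    by (simp add: alpha_def inner_complex_def c_def d_def x_def y_def algebra_simps)
  have be: "beta w = (y * a - x * b) / cr"
    by (simp add: beta_def inner_complex_def a_def b_def x_def y_def algebra_simps)
  have n: "cr \<noteq> 0" by (rule cr_ne)
  have r: "alpha w * a + beta w * c = x"
  proof -
    have "alpha w * a + beta w * c = ((x * d - y * c) * a + (y * a - x * b) * c) / cr"
      unfolding al be by (simp add: add_divide_distrib)
    also have "(x * d - y * c) * a + (y * a - x * b) * c = x * cr" unfolding crv by (simp add: algebra_simps)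
    finally show ?thesis using n by simp
  qed
  have i: "alpha w * b + beta w * d = y"
  proof -
    have "alpha w * b + beta w * d = ((x * d - y * c) * b + (y * a - x * b) * d) / cr"
      unfolding al be by (simp add: add_divide_distrib)
    also have "(x * d - y * c) * b + (y * a - x * b) * d = y * cr" unfolding crv by (simp add: algebra_simps)
    finally show ?thesis using n by simp
  qed
  show ?thesis using r i by (simp add: complex_eq_iff a_def b_def c_def d_def x_def y_def)
qed

lemma corr_cont: "continuous_on UNIV (corr w)"
  unfolding corr_def[abs_def] by (intro continuous_intros rho_cont)

lemma Lop_corr: "Lop (corr w) = w"
  unfolding corr_def[abs_def] using Lop_lin[OF rho_cont rho_cont] decomp by simp

definition KK where "KK = (norm Wa + norm Wb) / \<bar>cr\<bar>"

lemma ab_bound: "\<bar>alpha w\<bar> + \<bar>beta w\<bar> \<le> KK * norm w"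
proof -
  have n: "\<bar>cr\<bar> > 0" using cr_ne by simp
  have "\<bar>w \<bullet> (\<i> * Wb)\<bar> \<le> norm w * norm Wb"
    using Cauchy_Schwarz_ineq2[of w "\<i> * Wb"] by (simp add: norm_mult)
  hence 1: "\<bar>alpha w\<bar> \<le> norm w * norm Wb / \<bar>cr\<bar>"
    unfolding alpha_def using n by (simp add: abs_divide divide_right_mono)
  have "\<bar>w \<bullet> (\<i> * Wa)\<bar> \<le> norm w * norm Wa"
    using Cauchy_Schwarz_ineq2[of w "\<i> * Wa"] by (simp add: norm_mult)
  hence 2: "\<bar>beta w\<bar> \<le> norm w * norm Wa / \<bar>cr\<bar>"
    unfolding beta_def using n by (simp add: abs_divide divide_right_mono)
  have "norm w * norm Wb / \<bar>cr\<bar> + norm w * norm Wa / \<bar>cr\<bar> = KK * norm w"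
    unfolding KK_def by (simp add: add_divide_distrib algebra_simps)
  thus ?thesis using 1 2 by linarith
qed

lemma corr_part:
  assumes "s \<le> \<theta>0 + 2 * pi"
  shows "norm (integral {\<theta>0..s} (\<lambda>t. corr w t *\<^sub>R gd t)) \<le> KK * norm w"
proof -
  have e: "(\<lambda>t. corr w t *\<^sub>R gd t) = (\<lambda>t. alpha w *\<^sub>R (ua t *\<^sub>R gd t) + beta w *\<^sub>R (ub t *\<^sub>R gd t))"
    by (auto simp: fun_eq_iff corr_def scaleR_add_left)
  have "integral {\<theta>0..s} (\<lambda>t. corr w t *\<^sub>R gd t) =
        alpha w *\<^sub>R integral {\<theta>0..s} (\<lambda>t. ua t *\<^sub>R gd t) + beta w *\<^sub>R integral {\<theta>0..s} (\<lambda>t. ub t *\<^sub>R gd t)"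
    unfolding e
    by (subst integral_add[OF integrable_cmul[OF int_sc[OF rho_cont]] integrable_cmul[OF int_sc[OF rho_cont]]])
       (simp only: integral_cmul)
  hence "norm (integral {\<theta>0..s} (\<lambda>t. corr w t *\<^sub>R gd t)) \<le>
        \<bar>alpha w\<bar> * norm (integral {\<theta>0..s} (\<lambda>t. ua t *\<^sub>R gd t)) + \<bar>beta w\<bar> * norm (integral {\<theta>0..s} (\<lambda>t. ub t *\<^sub>R gd t))"
    using norm_triangle_ineq[of "alpha w *\<^sub>R integral {\<theta>0..s} (\<lambda>t. ua t *\<^sub>R gd t)"
            "beta w *\<^sub>R integral {\<theta>0..s} (\<lambda>t. ub t *\<^sub>R gd t)"]
    by (simp only: norm_scaleR)
  also have "\<dots> \<le> \<bar>alpha w\<bar> * 1 + \<bar>beta w\<bar> * 1"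
    by (intro add_mono mult_left_mono part_bound ea eb assms) auto
  also have "\<dots> \<le> KK * norm w" using ab_bound by simp
  finally show ?thesis .
qed

end



lemma shift_deriv:
  fixes F :: "real \<Rightarrow> complex"
  assumes "(F has_vector_derivative D) (at (t + c))"
  shows "((\<lambda>s. F (s + c)) has_vector_derivative D) (at t)"
proof -
  have "((\<lambda>s. s + c) has_vector_derivative 1) (at t)"
    by (auto intro!: derivative_eq_intros simp: has_vector_derivative_def)
  from vector_diff_chain_at[OF this assms] show ?thesis by (simp add: o_def)
qed

context S begin

definition thz :: "complex \<Rightarrow> real" where
  "thz z = (SOME t. \<theta>0 \<le> t \<and> t < \<theta>0 + 2 * pi \<and> \<gamma> t = z)"

lemma thz: assumes "N z = 1" shows "\<theta>0 \<le> thz z" "thz z < \<theta>0 + 2 * pi" "\<gamma> (thz z) = z"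
  using someI_ex[OF onto[OF assms, of \<theta>0]] unfolding thz_def[symmetric] by auto

definition PhiL :: "(real \<Rightarrow> real) \<Rightarrow> complex \<Rightarrow> complex" where
  "PhiL lam z = integral {\<theta>0..thz z} (\<lambda>t. lam t *\<^sub>R gd t)"

lemma ent_from_lam:
  assumes lc: "continuous_on UNIV lam" and lper: "\<And>t. lam (t + 2 * pi) = lam t"
    and L0: "Lop lam = 0"
  shows "((\<lambda>s. PhiL lam (\<gamma> s)) has_vector_derivative (lam t *\<^sub>R gd t)) (at t)"
proof -
  define f where "f t = lam t *\<^sub>R gd t" for t
  define a where "a = \<theta>0 - 1"
  define F0 where "F0 t = integral {a..t} f" for t
  have fe: "f = (\<lambda>t. lam t *\<^sub>R gd t)" by (simp add: f_def[abs_def])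
  have fc: "continuous_on A f" for A
    unfolding f_def[abs_def] by (intro continuous_on_scaleR continuous_on_subset[OF lc] gd_cont_on) simp
  have fi: "f integrable_on {x..y}" for x y by (rule integrable_continuous_interval[OF fc])
  interpret lp: periodic_fun_simple lam "2 * pi" by standard (rule lper)
  have fper: "f (t + of_int k * (2 * pi)) = f t" for t k
    unfolding f_def using lp.plus_of_int gd_int by simp
  have F0d: "(F0 has_vector_derivative f t) (at t)" if "t > a" for t
  proof -
    have "(F0 has_vector_derivative f t) (at t within {a..t + 1})"
      unfolding F0_def[abs_def] by (rule integral_has_vector_derivative[OF fc]) (use that in auto)
    moreover have "at t within {a..t + 1} = at t"
      by (rule at_within_interior) (use that in auto)
    ultimately show ?thesis by simp
  qed
  have Gd: "((\<lambda>s. F0 (s + 2 * pi) - F0 s) has_vector_derivative 0) (at s)" if "s > a" for s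
  proof -
    have "((\<lambda>s. F0 (s + 2 * pi)) has_vector_derivative f (s + 2 * pi)) (at s)"
      by (rule shift_deriv, rule F0d) (use that pi_gt_zero in linarith)
    moreover have "f (s + 2 * pi) = f s" using fper[of s 1] by simp
    ultimately have "((\<lambda>s. F0 (s + 2 * pi)) has_vector_derivative f s) (at s)" by simp
    from has_vector_derivative_diff[OF this F0d[OF that]] show ?thesis by simp
  qed
  have "\<exists>c. \<forall>x\<in>{\<theta>0..}. F0 (x + 2 * pi) - F0 x = c"
  proof (rule has_derivative_zero_constant)
    show "convex {\<theta>0..}" by (rule convex_real_interval)
    fix x assume "x \<in> {\<theta>0..}"
    hence "x > a" by (simp add: a_def)
    from Gd[OF this] have "((\<lambda>s. F0 (s + 2 * pi) - F0 s) has_derivative (\<lambda>h. 0)) (at x)"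
      by (simp add: has_vector_derivative_def)
    thus "((\<lambda>s. F0 (s + 2 * pi) - F0 s) has_derivative (\<lambda>h. 0)) (at x within {\<theta>0..})"
      by (rule has_derivative_at_withinI)
  qed
  then obtain c where c: "\<And>x. x \<ge> \<theta>0 \<Longrightarrow> F0 (x + 2 * pi) - F0 x = c" by auto
  have comb: "F0 y - F0 x = integral {x..y} f" if "a \<le> x" "x \<le> y" for x y
    using Henstock_Kurzweil_Integration.integral_combine[OF that fi[of a y]] unfolding F0_def by (simp add: algebra_simps)
  have "F0 (\<theta>0 + 2 * pi) - F0 \<theta>0 = Lop lam"
    using comb[of \<theta>0 "\<theta>0 + 2 * pi"] by (simp add: a_def Lop_def fe)
  hence c0: "c = 0" using c[of \<theta>0] L0 by simp
  have per1: "F0 (x + 2 * pi) = F0 x" if "x \<ge> \<theta>0" for x using c[OF that] c0 by simp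
  have pern: "F0 (x + of_nat n * (2 * pi)) = F0 x" if "x \<ge> \<theta>0" for x n
  proof (induction n)
    case 0 show ?case by simp
  next
    case (Suc n)
    have "0 \<le> of_nat n * (2 * pi)" by simp
    hence "x + of_nat n * (2 * pi) \<ge> \<theta>0" using that by linarith
    from per1[OF this] Suc show ?case by (simp add: algebra_simps)
  qed
  have Feq: "F0 x = F0 y" if hx: "x \<ge> \<theta>0" "y \<ge> \<theta>0" "\<gamma> x = \<gamma> y" for x y
  proof -
    obtain k :: int where k: "y = x + of_int k * (2 * pi)" using gamma_eq[OF hx(3)] by blast
    show ?thesis
    proof (cases "k \<ge> 0")
      case True
      hence "y = x + of_nat (nat k) * (2 * pi)" using k by simp
      thus ?thesis using pern[OF hx(1)] by simp
    next
      case False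
      hence "x = y + of_nat (nat (- k)) * (2 * pi)" using k by (simp add: algebra_simps)
      thus ?thesis using pern[OF hx(2)] by simp
    qed
  qed
  have PhiF: "PhiL lam (\<gamma> s) = F0 s - F0 \<theta>0" if "s \<ge> \<theta>0" for s
  proof -
    have th: "\<theta>0 \<le> thz (\<gamma> s)" "\<gamma> (thz (\<gamma> s)) = \<gamma> s" using thz[OF sphere[of s]] by auto
    have "PhiL lam (\<gamma> s) = F0 (thz (\<gamma> s)) - F0 \<theta>0"
      unfolding PhiL_def using comb[of \<theta>0 "thz (\<gamma> s)"] th by (simp add: a_def fe)
    also have "F0 (thz (\<gamma> s)) = F0 s" by (rule Feq) (use th that in auto)
    finally show ?thesis .
  qed
  obtain k :: int where k: "\<theta>0 + 1 \<le> t + of_int k * (2 * pi)"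
    using reduce_period[of "2 * pi" "\<theta>0 + 1" t] by auto
  define q where "q s = F0 (s + of_int k * (2 * pi)) - F0 \<theta>0" for s
  have "(q has_vector_derivative f (t + of_int k * (2 * pi))) (at t)"
    unfolding q_def
    by (rule has_vector_derivative_diff[OF shift_deriv[OF F0d] has_vector_derivative_const, simplified])
       (use k in \<open>simp add: a_def\<close>)
  hence qd: "(q has_vector_derivative f t) (at t)" using fper by simp
  show ?thesis
  proof (rule has_vector_derivative_transform_within_open[OF qd[unfolded f_def], of "{\<theta>0 - of_int k * (2 * pi) <..}"])
    show "open {\<theta>0 - of_int k * (2 * pi) <..}" by simp
    show "t \<in> {\<theta>0 - of_int k * (2 * pi) <..}" using k by simp
    fix y assume "y \<in> {\<theta>0 - of_int k * (2 * pi) <..}"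
    hence y: "y + of_int k * (2 * pi) \<ge> \<theta>0" by simp
    have "PhiL lam (\<gamma> y) = PhiL lam (\<gamma> (y + of_int k * (2 * pi)))" using gamma_int by simp
    also have "\<dots> = q y" unfolding q_def by (rule PhiF[OF y])
    finally show "q y = PhiL lam (\<gamma> y)" by simp
  qed
qed

end



lemma int_zero_k:
  fixes k :: int
  assumes "- 2 * pi < of_int k * (2 * pi)" "of_int k * (2 * pi) < 2 * pi"
  shows "k = 0"
proof (rule ccontr)
  assume "k \<noteq> 0"
  hence "k > 0 \<or> k < 0" by auto
  thus False
  proof
    assume "k > 0"
    hence "0 < of_int k * (2 * pi)" by simp
    thus False using int_gap assms(2) by blast
  next
    assume "k < 0"
    hence "of_int k * (2 * pi) < 0" by (simp add: mult_less_0_iff)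
    thus False using int_gap2 assms(1) by blast
  qed
qed

context S begin

lemma Lop_add:
  assumes "continuous_on UNIV u" "continuous_on UNIV v"
  shows "Lop (\<lambda>t. u t + v t) = Lop u + Lop v"
  using Lop_lin[OF assms, of 1 1] by simp

lemma int_vanish:
  assumes "\<And>t. t \<in> {x..y} \<Longrightarrow> u t = 0"
  shows "integral {x..y} (\<lambda>t. u t *\<^sub>R gd t) = 0"
  by (rule integral_unique, rule has_integral_is_0) (use assms in simp)

lemma int_tail:
  assumes "\<theta>0 \<le> s" "s \<le> \<theta>0 + 2 * pi" "continuous_on UNIV u"
    and "\<And>t. t \<in> {s..\<theta>0 + 2 * pi} \<Longrightarrow> u t = 0"
  shows "integral {\<theta>0..s} (\<lambda>t. u t *\<^sub>R gd t) = Lop u"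
proof -
  have "integral {\<theta>0..s} (\<lambda>t. u t *\<^sub>R gd t) + integral {s..\<theta>0 + 2 * pi} (\<lambda>t. u t *\<^sub>R gd t)
        = integral {\<theta>0..\<theta>0 + 2 * pi} (\<lambda>t. u t *\<^sub>R gd t)"
    by (rule Henstock_Kurzweil_Integration.integral_combine[OF assms(1,2) int_sc[OF assms(3)]])
  thus ?thesis using int_vanish[of s "\<theta>0 + 2 * pi" u] assms(4) by (simp add: Lop_def)
qed

lemma Lop_rho_bound: "0 < e \<Longrightarrow> e \<le> pi \<Longrightarrow> norm (Lop (rho \<theta>0 e c)) \<le> 1"
  unfolding Lop_def by (rule part_bound) auto

end

context S2 begin

definition d0 where "d0 = min (pi / 4) (min ((th1 - \<theta>0) / 8) ((\<theta>0 + 2 * pi - th1) / 8))"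

lemma d0: "0 < d0" "d0 \<le> pi / 4" "8 * d0 \<le> th1 - \<theta>0" "8 * d0 \<le> \<theta>0 + 2 * pi - th1"
  using th1 by (auto simp: d0_def min_def)

abbreviation p0 where "p0 \<delta> \<equiv> rho \<theta>0 \<delta> (\<theta>0 + 2 * \<delta>)"
abbreviation p1 where "p1 \<delta> \<equiv> rho \<theta>0 \<delta> (th1 - 2 * \<delta>)"
definition RR where "RR \<delta> = Lop (p0 \<delta>) + Lop (p1 \<delta>)"
definition lam where "lam \<delta> t = p0 \<delta> t + p1 \<delta> t + corr (- RR \<delta>) t"

lemma lam_cont: "continuous_on UNIV (lam \<delta>)"
  unfolding lam_def[abs_def] by (intro continuous_intros rho_cont corr_cont)

lemma lam_per: "lam \<delta> (t + 2 * pi) = lam \<delta> t"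
  using rho_periodic[of _ _ _ t 1] by (simp add: lam_def corr_def)

lemma lam_L0: "Lop (lam \<delta>) = 0"
proof -
  have c01: "continuous_on UNIV (\<lambda>t. p0 \<delta> t + p1 \<delta> t)" by (intro continuous_intros rho_cont)
  have "Lop (lam \<delta>) = Lop (\<lambda>t. p0 \<delta> t + p1 \<delta> t) + Lop (corr (- RR \<delta>))"
    unfolding lam_def[abs_def] by (rule Lop_add[OF c01 corr_cont])
  also have "\<dots> = RR \<delta> + (- RR \<delta>)"
    unfolding Lop_corr Lop_add[OF rho_cont rho_cont] RR_def ..
  finally show ?thesis by simp
qed

lemma lam_deriv: "\<exists>l'. (\<forall>\<theta>. (lam \<delta> has_real_derivative l' \<theta>) (at \<theta>)) \<and> continuous_on UNIV l'"
proof -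
  define w where "w = - RR \<delta>"
  define l' where "l' t = kb' \<delta> (t - (\<theta>0 + 2 * \<delta>)) / Dn \<theta>0 \<delta> (\<theta>0 + 2 * \<delta>)
     + kb' \<delta> (t - (th1 - 2 * \<delta>)) / Dn \<theta>0 \<delta> (th1 - 2 * \<delta>)
     + (alpha w * (kb' ea (t - ca) / Dn \<theta>0 ea ca) + beta w * (kb' eb (t - cb) / Dn \<theta>0 eb cb))" for t
  have "(lam \<delta> has_real_derivative l' t) (at t)" for t
  proof -
    have e: "lam \<delta> = (\<lambda>t. p0 \<delta> t + p1 \<delta> t + (alpha w * ua t + beta w * ub t))"
      by (simp add: fun_eq_iff lam_def corr_def w_def)
    show ?thesis unfolding e l'_def
      by (intro DERIV_add DERIV_cmult rho_deriv)
  qed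
  moreover have "continuous_on UNIV l'"
    unfolding l'_def[abs_def] by (intro continuous_intros rho'_cont)
  ultimately show ?thesis by blast
qed

lemma lam_ENT: "PhiL (lam \<delta>) \<in> ENT \<gamma>"
  unfolding ENT_def
  using lam_per lam_deriv ent_from_lam[OF lam_cont lam_per lam_L0] by blast

lemma W0:
  assumes "0 < \<delta>" "\<delta> \<le> d0" "\<theta>0 \<le> t" "t \<le> \<theta>0 + 2 * pi" "p0 \<delta> t \<noteq> 0"
  shows "\<theta>0 + \<delta> < t \<and> t < \<theta>0 + 3 * \<delta>"
proof -
  have dp: "\<delta> \<le> pi" using assms d0 by simp
  have "kb \<delta> (t - (\<theta>0 + 2 * \<delta>)) \<noteq> 0" using assms(5) by (simp add: rho_def)
  then obtain k :: int where k: "\<bar>t - (\<theta>0 + 2 * \<delta>) - of_int k * (2 * pi)\<bar> < \<delta>"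
    using kb_window[OF assms(1) dp] by blast
  have kk: "- \<delta> < t - (\<theta>0 + 2 * \<delta>) - of_int k * (2 * pi)" "t - (\<theta>0 + 2 * \<delta>) - of_int k * (2 * pi) < \<delta>"
    using k unfolding abs_less_iff by linarith+
  have "k = 0"
    by (rule int_zero_k) (use kk assms dp th1 d0 pi_gt_zero in linarith)+
  thus ?thesis using kk by simp
qed

lemma W1:
  assumes "0 < \<delta>" "\<delta> \<le> d0" "\<theta>0 \<le> t" "t \<le> \<theta>0 + 2 * pi" "p1 \<delta> t \<noteq> 0"
  shows "th1 - 3 * \<delta> < t \<and> t < th1 - \<delta>"
proof -
  have dp: "\<delta> \<le> pi" using assms d0 by simp
  have "kb \<delta> (t - (th1 - 2 * \<delta>)) \<noteq> 0" using assms(5) by (simp add: rho_def)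
  then obtain k :: int where k: "\<bar>t - (th1 - 2 * \<delta>) - of_int k * (2 * pi)\<bar> < \<delta>"
    using kb_window[OF assms(1) dp] by blast
  have kk: "- \<delta> < t - (th1 - 2 * \<delta>) - of_int k * (2 * pi)" "t - (th1 - 2 * \<delta>) - of_int k * (2 * pi) < \<delta>"
    using k unfolding abs_less_iff by linarith+
  have "k = 0"
    by (rule int_zero_k) (use kk assms dp th1 d0 pi_gt_zero in linarith)+
  thus ?thesis using kk by simp
qed

end



context S2 begin

definition I0 where "I0 \<delta> s = integral {\<theta>0..s} (\<lambda>t. p0 \<delta> t *\<^sub>R gd t)"
definition I1 where "I1 \<delta> s = integral {\<theta>0..s} (\<lambda>t. p1 \<delta> t *\<^sub>R gd t)"
definition Ic where "Ic \<delta> s = integral {\<theta>0..s} (\<lambda>t. corr (- RR \<delta>) t *\<^sub>R gd t)"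

lemma Phi_split: "PhiL (lam \<delta>) z = I0 \<delta> (thz z) + I1 \<delta> (thz z) + Ic \<delta> (thz z)"
proof -
  define s where "s = thz z"
  have e: "(\<lambda>t. lam \<delta> t *\<^sub>R gd t) = (\<lambda>t. (p0 \<delta> t *\<^sub>R gd t + p1 \<delta> t *\<^sub>R gd t) + corr (- RR \<delta>) t *\<^sub>R gd t)"
    by (simp add: fun_eq_iff lam_def scaleR_add_left)
  have i01: "(\<lambda>t. p0 \<delta> t *\<^sub>R gd t + p1 \<delta> t *\<^sub>R gd t) integrable_on {\<theta>0..s}"
    by (rule integrable_add[OF int_sc[OF rho_cont] int_sc[OF rho_cont]])
  have "PhiL (lam \<delta>) z = integral {\<theta>0..s} (\<lambda>t. (p0 \<delta> t *\<^sub>R gd t + p1 \<delta> t *\<^sub>R gd t) + corr (- RR \<delta>) t *\<^sub>R gd t)"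
    unfolding PhiL_def s_def e ..
  also have "\<dots> = integral {\<theta>0..s} (\<lambda>t. p0 \<delta> t *\<^sub>R gd t + p1 \<delta> t *\<^sub>R gd t) + Ic \<delta> s"
    unfolding Ic_def by (rule integral_add[OF i01 int_sc[OF corr_cont]])
  also have "integral {\<theta>0..s} (\<lambda>t. p0 \<delta> t *\<^sub>R gd t + p1 \<delta> t *\<^sub>R gd t) = I0 \<delta> s + I1 \<delta> s"
    unfolding I0_def I1_def by (rule integral_add[OF int_sc[OF rho_cont] int_sc[OF rho_cont]])
  finally show ?thesis unfolding s_def .
qed

lemma RR_bound: "0 < \<delta> \<Longrightarrow> \<delta> \<le> d0 \<Longrightarrow> norm (RR \<delta>) \<le> 2"
proof -
  assume a: "0 < \<delta>" "\<delta> \<le> d0"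
  hence dp: "\<delta> \<le> pi" using d0 by simp
  have "norm (RR \<delta>) \<le> norm (Lop (p0 \<delta>)) + norm (Lop (p1 \<delta>))" unfolding RR_def by (rule norm_triangle_ineq)
  also have "\<dots> \<le> 1 + 1" by (intro add_mono Lop_rho_bound a(1) dp)
  finally show ?thesis by simp
qed

lemma KK_nonneg: "KK \<ge> 0" unfolding KK_def by simp

lemma Phi_bound:
  assumes "0 < \<delta>" "\<delta> \<le> d0" "N z = 1"
  shows "norm (PhiL (lam \<delta>) z) \<le> 2 + 2 * KK"
proof -
  have dp: "\<delta> \<le> pi" using assms d0 by simp
  have s: "thz z \<le> \<theta>0 + 2 * pi" using thz[OF assms(3)] by simp
  have "norm (PhiL (lam \<delta>) z) \<le> norm (I0 \<delta> (thz z)) + norm (I1 \<delta> (thz z)) + norm (Ic \<delta> (thz z))"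
    unfolding Phi_split by (metis norm_triangle_ineq add_right_mono order_trans)
  also have "\<dots> \<le> 1 + 1 + KK * 2"
  proof (intro add_mono)
    show "norm (I0 \<delta> (thz z)) \<le> 1" unfolding I0_def by (rule part_bound[OF assms(1) dp s])
    show "norm (I1 \<delta> (thz z)) \<le> 1" unfolding I1_def by (rule part_bound[OF assms(1) dp s])
    have "norm (Ic \<delta> (thz z)) \<le> KK * norm (- RR \<delta>)" unfolding Ic_def by (rule corr_part[OF s])
    also have "\<dots> \<le> KK * 2" using RR_bound[OF assms(1,2)] KK_nonneg by (simp add: mult_left_mono)
    finally show "norm (Ic \<delta> (thz z)) \<le> KK * 2" .
  qed
  finally show ?thesis by simp
qed

abbreviation EE where "EE \<delta> \<equiv> norm (Lop (p0 \<delta>) - TT) + norm (Lop (p1 \<delta>) + TT)"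

lemma RR_EE: "norm (RR \<delta>) \<le> EE \<delta>"
proof -
  have "RR \<delta> = (Lop (p0 \<delta>) - TT) + (Lop (p1 \<delta>) + TT)" by (simp add: RR_def)
  thus ?thesis by (metis norm_triangle_ineq)
qed

lemma E_lim:
  assumes "\<epsilon> > 0"
  shows "\<exists>\<eta>>0. \<forall>\<delta>. 0 < \<delta> \<and> \<delta> < \<eta> \<longrightarrow> EE \<delta> \<le> \<epsilon>"
proof -
  have e2: "\<epsilon> / 2 > 0" using assms by simp
  obtain \<eta>1 where \<eta>1: "\<eta>1 > 0" "\<And>\<delta> c'. 0 < \<delta> \<and> \<delta> < \<eta>1 \<and> \<bar>c' - \<theta>0\<bar> < \<eta>1 \<Longrightarrow> norm (Lop (rho \<theta>0 \<delta> c') - gd \<theta>0) \<le> \<epsilon> / 2"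
    using bump_lim[OF e2, of \<theta>0] by blast
  obtain \<eta>2 where \<eta>2: "\<eta>2 > 0" "\<And>\<delta> c'. 0 < \<delta> \<and> \<delta> < \<eta>2 \<and> \<bar>c' - th1\<bar> < \<eta>2 \<Longrightarrow> norm (Lop (rho \<theta>0 \<delta> c') - gd th1) \<le> \<epsilon> / 2"
    using bump_lim[OF e2, of th1] by blast
  define \<eta> where "\<eta> = min \<eta>1 \<eta>2 / 3"
  have \<eta>: "\<eta> > 0" "3 * \<eta> \<le> \<eta>1" "3 * \<eta> \<le> \<eta>2" using \<eta>1 \<eta>2 by (auto simp: \<eta>_def)
  show ?thesis
  proof (intro exI[of _ \<eta>] conjI allI impI \<eta>(1))
    fix \<delta> assume d: "0 < \<delta> \<and> \<delta> < \<eta>"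
    have a: "norm (Lop (p0 \<delta>) - TT) \<le> \<epsilon> / 2" by (rule \<eta>1(2)) (use d \<eta> in auto)
    have "norm (Lop (p1 \<delta>) - gd th1) \<le> \<epsilon> / 2" by (rule \<eta>2(2)) (use d \<eta> in auto)
    hence b: "norm (Lop (p1 \<delta>) + TT) \<le> \<epsilon> / 2" using gd_th1 by simp
    show "EE \<delta> \<le> \<epsilon>" using a b by simp
  qed
qed

lemma conv_bound:
  assumes z: "N z = 1"
  shows "\<exists>b>0. \<forall>\<delta>. 0 < \<delta> \<and> \<delta> < b \<longrightarrow> norm (PhiL (lam \<delta>) z - Phi_xi \<gamma> \<theta>0 z) \<le> (1 + KK) * EE \<delta>"
proof -
  define s where "s = thz z"
  have s: "\<theta>0 \<le> s" "s < \<theta>0 + 2 * pi" "\<gamma> s = z" using thz[OF z] by (auto simp: s_def)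
  have tgt: "Phi_xi \<gamma> \<theta>0 z = (if hh s > 0 then TT else 0)"
    unfolding Phi_xi_def using s(3) by simp
  have Ic_b: "norm (Ic \<delta> s) \<le> KK * EE \<delta>" for \<delta>
  proof -
    have "norm (Ic \<delta> s) \<le> KK * norm (- RR \<delta>)" unfolding Ic_def by (rule corr_part) (use s in simp)
    also have "\<dots> \<le> KK * EE \<delta>" using RR_EE[of \<delta>] KK_nonneg by (simp add: mult_left_mono)
    finally show ?thesis .
  qed
  have EE0: "EE \<delta> \<ge> 0" for \<delta> by simp
  consider "s = \<theta>0" | "\<theta>0 < s" "s < th1" | "th1 \<le> s" using s(1) by linarith
  then show ?thesis
  proof cases
    case 1
    have "PhiL (lam \<delta>) z = 0" for \<delta> unfolding PhiL_def s_def[symmetric] 1 by simp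
    moreover have "Phi_xi \<gamma> \<theta>0 z = 0" using tgt 1 hh_th0 by simp
    ultimately show ?thesis using EE0 KK_nonneg by (intro exI[of _ 1]) auto
  next
    case 2
    define b where "b = min d0 (min ((s - \<theta>0) / 3) ((th1 - s) / 3))"
    have b: "0 < b" "b \<le> d0" "3 * b \<le> s - \<theta>0" "3 * b \<le> th1 - s"
      using 2 d0 by (auto simp: b_def min_def)
    show ?thesis
    proof (intro exI[of _ b] conjI allI impI b(1))
      fix \<delta> assume d: "0 < \<delta> \<and> \<delta> < b"
      have i0: "I0 \<delta> s = Lop (p0 \<delta>)"
        unfolding I0_def
      proof (rule int_tail[OF s(1) _ rho_cont])
        show "s \<le> \<theta>0 + 2 * pi" using s by simp
        fix t assume t: "t \<in> {s..\<theta>0 + 2 * pi}"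
        show "p0 \<delta> t = 0"
        proof (rule ccontr)
          assume "p0 \<delta> t \<noteq> 0"
          from W0[OF _ _ _ _ this] d b t s show False by auto
        qed
      qed
      have i1: "I1 \<delta> s = 0"
        unfolding I1_def
      proof (rule int_vanish)
        fix t assume t: "t \<in> {\<theta>0..s}"
        show "p1 \<delta> t = 0"
        proof (rule ccontr)
          assume "p1 \<delta> t \<noteq> 0"
          from W1[OF _ _ _ _ this] d b t s show False by auto
        qed
      qed
      have "hh s > 0" using hh_pos 2 by simp
      hence "PhiL (lam \<delta>) z - Phi_xi \<gamma> \<theta>0 z = (Lop (p0 \<delta>) - TT) + Ic \<delta> s"
        using tgt Phi_split[of \<delta> z] i0 i1 by (simp add: s_def)
      hence "norm (PhiL (lam \<delta>) z - Phi_xi \<gamma> \<theta>0 z) \<le> norm (Lop (p0 \<delta>) - TT) + norm (Ic \<delta> s)"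
        by (metis norm_triangle_ineq)
      also have "\<dots> \<le> EE \<delta> + KK * EE \<delta>"
        using Ic_b[of \<delta>] norm_ge_zero[of "Lop (p1 \<delta>) + TT"] by linarith
      finally show "norm (PhiL (lam \<delta>) z - Phi_xi \<gamma> \<theta>0 z) \<le> (1 + KK) * EE \<delta>"
        by (simp add: algebra_simps)
    qed
  next
    case 3
    show ?thesis
    proof (intro exI[of _ d0] conjI allI impI d0(1))
      fix \<delta> assume d: "0 < \<delta> \<and> \<delta> < d0"
      have i0: "I0 \<delta> s = Lop (p0 \<delta>)"
        unfolding I0_def
      proof (rule int_tail[OF s(1) _ rho_cont])
        show "s \<le> \<theta>0 + 2 * pi" using s by simp
        fix t assume t: "t \<in> {s..\<theta>0 + 2 * pi}"
        show "p0 \<delta> t = 0"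
        proof (rule ccontr)
          assume "p0 \<delta> t \<noteq> 0"
          from W0[OF _ _ _ _ this] d t s 3 d0 show False by auto
        qed
      qed
      have i1: "I1 \<delta> s = Lop (p1 \<delta>)"
        unfolding I1_def
      proof (rule int_tail[OF s(1) _ rho_cont])
        show "s \<le> \<theta>0 + 2 * pi" using s by simp
        fix t assume t: "t \<in> {s..\<theta>0 + 2 * pi}"
        show "p1 \<delta> t = 0"
        proof (rule ccontr)
          assume "p1 \<delta> t \<noteq> 0"
          from W1[OF _ _ _ _ this] d t s 3 show False by auto
        qed
      qed
      have "\<not> hh s > 0"
      proof (cases "s = th1")
        case True thus ?thesis using hh_th1 by simp
      next
        case False thus ?thesis using hh_neg[of s] 3 s by simp
      qed
      hence "PhiL (lam \<delta>) z - Phi_xi \<gamma> \<theta>0 z = RR \<delta> + Ic \<delta> s"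
        using tgt Phi_split[of \<delta> z] i0 i1 by (simp add: s_def RR_def)
      hence "norm (PhiL (lam \<delta>) z - Phi_xi \<gamma> \<theta>0 z) \<le> norm (RR \<delta>) + norm (Ic \<delta> s)"
        by (metis norm_triangle_ineq)
      also have "\<dots> \<le> EE \<delta> + KK * EE \<delta>" using Ic_b[of \<delta>] RR_EE[of \<delta>] by simp
      finally show "norm (PhiL (lam \<delta>) z - Phi_xi \<gamma> \<theta>0 z) \<le> (1 + KK) * EE \<delta>"
        by (simp add: algebra_simps)
    qed
  qed
qed

end



context S2 begin

lemma main2:
  "\<exists>(\<Phi> :: real \<Rightarrow> complex \<Rightarrow> complex) (M :: real).
     (\<forall>\<delta>>0. \<Phi> \<delta> \<in> ENT \<gamma> \<and> (\<forall>z. N z = 1 \<longrightarrow> norm (\<Phi> \<delta> z) \<le> M)) \<and>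
     (\<forall>z. N z = 1 \<longrightarrow> ((\<lambda>\<delta>. \<Phi> \<delta> z) \<longlongrightarrow> Phi_xi \<gamma> \<theta>0 z) (at_right 0))"
proof (intro exI[of _ "\<lambda>\<delta>. PhiL (lam (min \<delta> d0))"] exI[of _ "2 + 2 * KK"] conjI allI impI)
  fix \<delta> :: real assume d: "\<delta> > 0"
  show "PhiL (lam (min \<delta> d0)) \<in> ENT \<gamma>" by (rule lam_ENT)
  fix z assume z: "N z = 1"
  show "norm (PhiL (lam (min \<delta> d0)) z) \<le> 2 + 2 * KK"
    by (rule Phi_bound[OF _ _ z]) (use d d0 in auto)
next
  fix z assume z: "N z = 1"
  obtain b where b: "b > 0" "\<And>\<delta>. 0 < \<delta> \<and> \<delta> < b \<Longrightarrow> norm (PhiL (lam \<delta>) z - Phi_xi \<gamma> \<theta>0 z) \<le> (1 + KK) * EE \<delta>"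
    using conv_bound[OF z] by blast
  show "((\<lambda>\<delta>. PhiL (lam (min \<delta> d0)) z) \<longlongrightarrow> Phi_xi \<gamma> \<theta>0 z) (at_right 0)"
  proof (rule tendstoI)
    fix e :: real assume e: "e > 0"
    have e': "e / (2 * (1 + KK)) > 0" using e KK_nonneg by simp
    obtain \<eta> where \<eta>: "\<eta> > 0" "\<And>\<delta>. 0 < \<delta> \<and> \<delta> < \<eta> \<Longrightarrow> EE \<delta> \<le> e / (2 * (1 + KK))"
      using E_lim[OF e'] by blast
    show "eventually (\<lambda>\<delta>. dist (PhiL (lam (min \<delta> d0)) z) (Phi_xi \<gamma> \<theta>0 z) < e) (at_right 0)"
      unfolding eventually_at_right_field
    proof (intro exI[of _ "min \<eta> (min b d0)"] conjI allI impI)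
      show "min \<eta> (min b d0) > 0" using \<eta> b d0 by simp
      fix \<delta> :: real assume d: "\<delta> > 0" "\<delta> < min \<eta> (min b d0)"
      hence m: "min \<delta> d0 = \<delta>" by simp
      have "norm (PhiL (lam \<delta>) z - Phi_xi \<gamma> \<theta>0 z) \<le> (1 + KK) * EE \<delta>" using b(2)[of \<delta>] d by simp
      also have "\<dots> \<le> (1 + KK) * (e / (2 * (1 + KK)))"
        using \<eta>(2)[of \<delta>] d KK_nonneg by (intro mult_left_mono) auto
      also have "\<dots> = e / 2" using KK_nonneg by (simp add: field_simps)
      also have "\<dots> < e" using e by simp
      finally show "dist (PhiL (lam (min \<delta> d0)) z) (Phi_xi \<gamma> \<theta>0 z) < e"
        unfolding m by (simp add: dist_norm)
    qed
  qed
qed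

end

lemma (in S) mainS:
  "\<exists>(\<Phi> :: real \<Rightarrow> complex \<Rightarrow> complex) (M :: real).
     (\<forall>\<delta>>0. \<Phi> \<delta> \<in> ENT \<gamma> \<and> (\<forall>z. N z = 1 \<longrightarrow> norm (\<Phi> \<delta> z) \<le> M)) \<and>
     (\<forall>z. N z = 1 \<longrightarrow> ((\<lambda>\<delta>. \<Phi> \<delta> z) \<longlongrightarrow> Phi_xi \<gamma> \<theta>0 z) (at_right 0))"
proof -
  obtain ea ca eb cb where "S2 N \<gamma> \<theta>0 ea ca eb cb" using S2_ex by blast
  then interpret S2 N \<gamma> \<theta>0 ea ca eb cb .
  show ?thesis by (rule main2)
qed

theorem lemma3p3:
  fixes N :: "complex \<Rightarrow> real" and \<gamma> :: "real \<Rightarrow> complex" and \<theta>0 :: real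
  assumes norm: "strictly_convex_norm N"
    and C1: "C1_away_from_origin N"
    and \<gamma>_diff: "\<forall>\<theta>. \<gamma> differentiable (at \<theta>)"
    and \<gamma>_C1: "continuous_on UNIV (\<lambda>\<theta>. vector_derivative \<gamma> (at \<theta>))"
    and \<gamma>_arclength: "\<forall>\<theta>. norm (vector_derivative \<gamma> (at \<theta>)) = 1"
    and \<gamma>_periodic: "\<forall>\<theta>. \<gamma> (\<theta> + 2 * pi) = \<gamma> \<theta>"
    and \<gamma>_bij: "bij_betw \<gamma> {0..<2 * pi} {z. N z = 1}"
    and \<gamma>_ccw: "\<forall>\<theta>. Im (cnj (\<gamma> \<theta>) * vector_derivative \<gamma> (at \<theta>)) > 0"
  shows "\<exists>(\<Phi> :: real \<Rightarrow> complex \<Rightarrow> complex) (M :: real).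
           (\<forall>\<delta>>0. \<Phi> \<delta> \<in> ENT \<gamma> \<and> (\<forall>z. N z = 1 \<longrightarrow> norm (\<Phi> \<delta> z) \<le> M)) \<and>
           (\<forall>z. N z = 1 \<longrightarrow> ((\<lambda>\<delta>. \<Phi> \<delta> z) \<longlongrightarrow> Phi_xi \<gamma> \<theta>0 z) (at_right 0))"
proof -
  interpret S N \<gamma> \<theta>0
    by (rule S.intro) (rule assms)+
  show ?thesis by (rule mainS)
qed



end
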